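(* Let $N\ge 2$ be an integer, $h>0$, $\epsilon>0$ and $\Delta t>0$. Let $A$ be the $N\times N$ matrix discretizing the negative second derivative with homogeneous Neumann boundary conditions, i.e. for $V=(v_1,\dots,v_N)^T$, $$(AV)_i=\frac{2v_i-v_{i-1}-v_{i+1}}{h^2},\quad i=1,\dots,N,\qquad\text{with the convention } v_0=v_1,\ v_{N+1}=v_N .$$ Consider the sequence of vectors $U^k\in\mathbb{R}^N$ defined from $U^0$ by the linearized implicit Euler scheme (with zero boundary flux) $$U^{k+1}+\Delta t\, A U^{k+1}+\frac{\Delta t}{\epsilon^2}(U^k)^2U^{k+1}=U^k+\frac{\Delta t}{\epsilon^2}U^k,\qquad k\ge 0,$$ where $(U^k)^2U^{k+1}$ denotes the componentwise product $\big((u^k_i)^2u^{k+1}_i\big)_{i}$. If $\Delta t<\epsilon^2$ and $-1\le U^0\le 1$ componentwise, then $-1\le U^k\le 1$ componentwise for every $k\in\mathbb{N}$.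
   Context: This scheme is the time discretization of the semi-discrete (finite-difference in space) one-dimensional Allen–Cahn equation $u_t-u_{xx}+\frac{1}{\epsilon^2}u(u^2-1)=0$ on $]0,1[$ with Neumann boundary conditions $u_x(0,t)=\alpha(t)$, $u_x(1,t)=0$; the proposition concerns the case of zero control flux $\alpha=0$, in which the boundary source term of the scheme vanishes. Inequalities between vectors are understood componentwise. *)

theory Defs
  imports Complex_Main
begin

text \<open>Vectors in R^N are represented as functions nat => real, components indexed by 1..N.
  Ghost values v_0 = v_1 and v_(N+1) = v_N implement the homogeneous Neumann convention.\<close>

definition ghost_ext :: "nat \<Rightarrow> (nat \<Rightarrow> real) \<Rightarrow> nat \<Rightarrow> real" where
  "ghost_ext N v j = (if j = 0 then v 1 else if j = N + 1 then v N else v j)"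

definition neumann_lap :: "nat \<Rightarrow> real \<Rightarrow> (nat \<Rightarrow> real) \<Rightarrow> nat \<Rightarrow> real" where
  "neumann_lap N h v i = (2 * v i - ghost_ext N v (i - 1) - ghost_ext N v (i + 1)) / h\<^sup>2"

end

theory Submission
  imports Defs
begin

lemma ghost_le:
  assumes "1 \<le> i" "i \<le> N" "\<forall>j. 1 \<le> j \<and> j \<le> N \<longrightarrow> v j \<le> v i" "j \<le> N + 1"
  shows "ghost_ext N v j \<le> v i"
  using assms by (auto simp: ghost_ext_def)

lemma ghost_ge:
  assumes "1 \<le> i" "i \<le> N" "\<forall>j. 1 \<le> j \<and> j \<le> N \<longrightarrow> v i \<le> v j" "j \<le> N + 1"
  shows "v i \<le> ghost_ext N v j"
  using assms by (auto simp: ghost_ext_def)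

lemma lap_max:
  assumes "h > 0" "1 \<le> i" "i \<le> N" "\<forall>j. 1 \<le> j \<and> j \<le> N \<longrightarrow> v j \<le> v i"
  shows "neumann_lap N h v i \<ge> 0"
proof -
  have a: "ghost_ext N v (i - 1) \<le> v i" by (rule ghost_le) (use assms in auto)
  have b: "ghost_ext N v (i + 1) \<le> v i" by (rule ghost_le) (use assms in auto)
  show ?thesis unfolding neumann_lap_def using a b assms(1) by (simp add: divide_nonneg_pos)
qed

lemma lap_min:
  assumes "h > 0" "1 \<le> i" "i \<le> N" "\<forall>j. 1 \<le> j \<and> j \<le> N \<longrightarrow> v i \<le> v j"
  shows "neumann_lap N h v i \<le> 0"
proof -
  have a: "v i \<le> ghost_ext N v (i - 1)" by (rule ghost_ge) (use assms in auto)
  have b: "v i \<le> ghost_ext N v (i + 1)" by (rule ghost_ge) (use assms in auto)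
  show ?thesis unfolding neumann_lap_def using a b assms(1) by (simp add: divide_nonpos_pos)
qed

lemma obtain_max:
  fixes v :: "nat \<Rightarrow> real"
  assumes "N \<ge> 1"
  obtains i where "1 \<le> i" "i \<le> N" "\<forall>j. 1 \<le> j \<and> j \<le> N \<longrightarrow> v j \<le> v i"
proof -
  have "finite (v ` {1..N})" "v ` {1..N} \<noteq> {}" using assms by auto
  then have "Max (v ` {1..N}) \<in> v ` {1..N}" by (rule Max_in)
  then obtain i where i: "i \<in> {1..N}" "v i = Max (v ` {1..N})" by auto
  have "\<forall>j. 1 \<le> j \<and> j \<le> N \<longrightarrow> v j \<le> v i" using i by auto
  with i that show ?thesis by auto
qed

lemma obtain_min:
  fixes v :: "nat \<Rightarrow> real"
  assumes "N \<ge> 1"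
  obtains i where "1 \<le> i" "i \<le> N" "\<forall>j. 1 \<le> j \<and> j \<le> N \<longrightarrow> v i \<le> v j"
proof -
  have "finite (v ` {1..N})" "v ` {1..N} \<noteq> {}" using assms by auto
  then have "Min (v ` {1..N}) \<in> v ` {1..N}" by (rule Min_in)
  then obtain i where i: "i \<in> {1..N}" "v i = Min (v ` {1..N})" by auto
  have "\<forall>j. 1 \<le> j \<and> j \<le> N \<longrightarrow> v i \<le> v j" using i by auto
  with i that show ?thesis by auto
qed

lemma upper:
  fixes c u w L :: real
  assumes "w + L + c * u^2 * w = u + c * u" "L \<ge> 0" "0 < c" "c < 1" "-1 \<le> u" "u \<le> 1"
  shows "w \<le> 1"
proof (rule ccontr)
  assume "\<not> w \<le> 1"
  hence w: "w - 1 > 0" by simp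
  have p: "0 < 1 + c*u^2" using assms(3) by (simp add: add_pos_nonneg)
  have "(w - 1) * (1 + c*u^2) > 0" using w p by simp
  moreover have cu: "c*u \<le> c" using assms(3,6) by simp
  have "(1 - c*u) * (1 - u) \<ge> 0"
    using cu assms(4,6) by (intro mult_nonneg_nonneg) auto
  ultimately show False using assms(1,2) by (simp add: algebra_simps power2_eq_square)
qed

lemma lower:
  fixes c u w L :: real
  assumes "w + L + c * u^2 * w = u + c * u" "L \<le> 0" "0 < c" "c < 1" "-1 \<le> u" "u \<le> 1"
  shows "-1 \<le> w"
proof (rule ccontr)
  assume "\<not> -1 \<le> w"
  hence w: "-1 - w > 0" by simp
  have p: "0 < 1 + c*u^2" using assms(3) by (simp add: add_pos_nonneg)
  have "(-1 - w) * (1 + c*u^2) > 0" using w p by simp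
  moreover have cu: "-c \<le> c*u" using mult_left_mono[of "-1" u c] assms(3,5) by simp
  have "(1 + c*u) * (1 + u) \<ge> 0"
    using cu assms(4,5) by (intro mult_nonneg_nonneg) auto
  ultimately show False using assms(1,2) by (simp add: algebra_simps power2_eq_square)
qed

theorem mainTheorem1:
  fixes N :: nat and h eps dt :: real and U :: "nat \<Rightarrow> nat \<Rightarrow> real"
  assumes "N \<ge> 2" and "h > 0" and "eps > 0" and "dt > 0"
    and scheme: "\<And>k i. 1 \<le> i \<Longrightarrow> i \<le> N \<Longrightarrow>
        U (Suc k) i + dt * neumann_lap N h (U (Suc k)) i + dt / eps\<^sup>2 * (U k i)\<^sup>2 * U (Suc k) i
          = U k i + dt / eps\<^sup>2 * U k i"
    and "dt < eps\<^sup>2"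
    and "\<And>i. 1 \<le> i \<Longrightarrow> i \<le> N \<Longrightarrow> -1 \<le> U 0 i \<and> U 0 i \<le> 1"
  shows "\<forall>k i. 1 \<le> i \<and> i \<le> N \<longrightarrow> -1 \<le> U k i \<and> U k i \<le> 1"
proof -
  define c where "c = dt / eps\<^sup>2"
  have c0: "0 < c" using assms by (simp add: c_def)
  have c1: "c < 1" using assms by (simp add: c_def)
  have "\<forall>i. 1 \<le> i \<and> i \<le> N \<longrightarrow> -1 \<le> U k i \<and> U k i \<le> 1" for k
  proof (induction k)
    case 0 then show ?case using assms(7) by auto
  next
    case (Suc k)
    have N1: "N \<ge> 1" using assms(1) by simp
    have up: "U (Suc k) j \<le> 1" if j: "1 \<le> j" "j \<le> N" for j
    proof -
      obtain i where i: "1 \<le> i" "i \<le> N" "\<forall>j. 1 \<le> j \<and> j \<le> N \<longrightarrow> U (Suc k) j \<le> U (Suc k) i"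
        using obtain_max[OF N1] by metis
      have L: "dt * neumann_lap N h (U (Suc k)) i \<ge> 0"
        using lap_max[OF assms(2) i] assms(4) by simp
      have "U (Suc k) i \<le> 1"
        apply (rule upper[OF _ L c0 c1])
        using scheme[OF i(1,2), of k] Suc.IH i unfolding c_def by auto
      thus ?thesis using i j by force
    qed
    have lo: "-1 \<le> U (Suc k) j" if j: "1 \<le> j" "j \<le> N" for j
    proof -
      obtain i where i: "1 \<le> i" "i \<le> N" "\<forall>j. 1 \<le> j \<and> j \<le> N \<longrightarrow> U (Suc k) i \<le> U (Suc k) j"
        using obtain_min[OF N1] by metis
      have L: "dt * neumann_lap N h (U (Suc k)) i \<le> 0"
        using lap_min[OF assms(2) i] assms(4) by (simp add: mult_nonneg_nonpos)
      have "-1 \<le> U (Suc k) i"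
        apply (rule lower[OF _ L c0 c1])
        using scheme[OF i(1,2), of k] Suc.IH i unfolding c_def by auto
      thus ?thesis using i j by force
    qed
    show ?case using up lo by auto
  qed
  then show ?thesis by blast
qed

end
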